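(* Fix a binary instance $(\mu_0,\hat q)$. There is a constant $C<\infty$, depending only on $(\mu_0,\hat q)$, such that for every $T\ge 4$ and every bias $\alpha^\star\in(0,1]$, the Safe Exploration policy satisfies $\mathrm{Reg}_T(\mathrm{SE};\alpha^\star)\le C\log\log T$. In particular one may take any $C$ proportional to $2\frac{(1-\mu_0)^2}{(\hat q-\mu_0)\hat q}+1$, times an absolute constant.
   Context: Binary model: states $\Omega=\{0,1\}$, actions $A=\{0,1\}$, prior $\mu_0=\Pr(\omega=1)\in(0,1)$, cutoff $\hat q\in(\mu_0,1)$, sender utility $u_S(a,\omega)=\mathbf 1\{a=1\}$. A receiver with fixed unknown bias $\alpha^\star\in(0,1]$ takes action $1$ after Bayesian posterior $\nu=\Pr(\omega=1\mid s)$ iff $(1-\alpha^\star)\mu_0+\alpha^\star\nu\ge\hat q$. Define $\nu_B(\alpha)=\mu_0+(\hat q-\mu_0)/\alpha$ and $\alpha_{\min}=(\hat q-\mu_0)/(1-\mu_0)$. For $\alpha\in[\alpha_{\min},1]$, let $\tau(\alpha)$ be the Bayes-plausible scheme with mass $1-\mu_0/\nu_B(\alpha)$ on posterior $0$ and mass $\mu_0/\nu_B(\alpha)$ on posterior $\nu_B(\alpha)$. Repeated interaction over $T$ rounds. In each round the sender commits to a Bayes-plausible posterior distribution, a state $\omega_t\sim\mu_0$ and posterior $\nu_t$ are realized, the receiver acts, and the sender observes $\nu_t$ and the action. Let $\mathrm{OPT}(\alpha^\star)$ be the supremum over Bayes-plausible distributions of the probability of action $1$. The regret is $\mathrm{Reg}_T=T\cdot\mathrm{OPT}(\alpha^\star)-\sum_t\mathbb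 E[\Pr(\text{action }1\text{ in round }t\mid\text{history})]$. Safe Exploration (SE) policy: initialize $\underline\alpha=\alpha_{\min}$, $\overline\alpha=1$, $\epsilon=1/2$. While $\overline\alpha-\underline\alpha>1/T$ and rounds remain, run a phase: 1. Set $m_{\rm prev}=\underline\alpha$ and $m=\underline\alpha+\epsilon$. 2. While $m\le\overline\alpha$ and rounds remain, play $\tau(m)$ for one round. If the realized posterior is nonzero: - if the receiver plays action $1$, set $m_{\rm prev}\gets m$ and $m\gets m+\epsilon$; - otherwise set $(\underline\alpha,\overline\alpha)\gets(m_{\rm prev},m)$, $\epsilon\gets\epsilon^2$, and end the phase. 3. If the inner loop ended because $m>\overline\alpha$, set $(\underline\alpha,\overline\alpha)\gets(m_{\rm prev},\overline\alpha)$ and $\epsilon\gets\epsilon^2$. After exploration ends, play $\tau(\underline\alpha)$ in all remaining rounds. *)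

theory Defs
  imports "HOL-Probability.Probability_Mass_Function"
begin

text \<open>Binary persuasion instance: prior mu0 = Pr(omega = 1), cutoff qh.
  Receiver with bias a acts (action 1) after posterior v iff
  (1 - a) * mu0 + a * v >= qh.\<close>

definition acts :: "real \<Rightarrow> real \<Rightarrow> real \<Rightarrow> real \<Rightarrow> bool" where
  "acts mu0 qh a v \<longleftrightarrow> (1 - a) * mu0 + a * v \<ge> qh"

definition nuB :: "real \<Rightarrow> real \<Rightarrow> real \<Rightarrow> real" where
  "nuB mu0 qh a = mu0 + (qh - mu0) / a"

definition alpha_min :: "real \<Rightarrow> real \<Rightarrow> real" where
  "alpha_min mu0 qh = (qh - mu0) / (1 - mu0)"

definition bayes_plausible :: "real \<Rightarrow> real pmf \<Rightarrow> bool" where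
  "bayes_plausible mu0 p \<longleftrightarrow>
     set_pmf p \<subseteq> {0..1} \<and> measure_pmf.expectation p (\<lambda>v. v) = mu0"

definition OPT :: "real \<Rightarrow> real \<Rightarrow> real \<Rightarrow> real" where
  "OPT mu0 qh a = Sup {measure_pmf.prob p {v. acts mu0 qh a v} | p. bayes_plausible mu0 p}"

definition tau :: "real \<Rightarrow> real \<Rightarrow> real \<Rightarrow> real pmf" where
  "tau mu0 qh a = map_pmf (\<lambda>b. if b then nuB mu0 qh a else 0)
                          (bernoulli_pmf (mu0 / nuB mu0 qh a))"

text \<open>State of the Safe Exploration policy:
  Explore lo hi eps mprev m  -- inside a phase, about to play tau(m);
  Exploit lo                 -- exploration is over, play tau(lo) forever.\<close>
datatype se_state = Explore real real real real real | Exploit real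

text \<open>Phases whose
  first candidate m = lo + eps already exceeds hi use no rounds; they only square eps
  (and leave lo, hi unchanged), so we skip to the first nonempty phase.\<close>
definition enter_phase :: "nat \<Rightarrow> real \<Rightarrow> real \<Rightarrow> real \<Rightarrow> se_state" where
  "enter_phase T lo hi eps =
     (if hi - lo > 1 / real T then
        (let k = (LEAST k::nat. lo + eps ^ (2 ^ k) \<le> hi) in
           Explore lo hi (eps ^ (2 ^ k)) lo (lo + eps ^ (2 ^ k)))
      else Exploit lo)"

definition se_init :: "real \<Rightarrow> real \<Rightarrow> nat \<Rightarrow> se_state" where
  "se_init mu0 qh T = enter_phase T (alpha_min mu0 qh) 1 (1/2)"

fun se_play :: "real \<Rightarrow> real \<Rightarrow> se_state \<Rightarrow> real pmf" where
  "se_play mu0 qh (Explore lo hi eps mp m) = tau mu0 qh m"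
| "se_play mu0 qh (Exploit lo) = tau mu0 qh lo"

fun se_update :: "nat \<Rightarrow> se_state \<Rightarrow> real \<Rightarrow> bool \<Rightarrow> se_state" where
  "se_update T (Explore lo hi eps mp m) v act =
     (if v = 0 then Explore lo hi eps mp m
      else if act then
        (if m + eps \<le> hi then Explore lo hi eps m (m + eps)
         else enter_phase T m hi (eps ^ 2))
      else enter_phase T mp m (eps ^ 2))"
| "se_update T (Exploit lo) v act = Exploit lo"

text \<open>Expected sum, over n remaining rounds, of Pr(action 1 in the round | history).\<close>
fun se_value :: "real \<Rightarrow> real \<Rightarrow> real \<Rightarrow> nat \<Rightarrow> nat \<Rightarrow> se_state \<Rightarrow> real" where
  "se_value mu0 qh a T 0 s = 0"
| "se_value mu0 qh a T (Suc n) s =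
     measure_pmf.prob (se_play mu0 qh s) {v. acts mu0 qh a v}
     + measure_pmf.expectation (se_play mu0 qh s)
         (\<lambda>v. se_value mu0 qh a T n (se_update T s v (acts mu0 qh a v)))"

definition SE_regret :: "real \<Rightarrow> real \<Rightarrow> real \<Rightarrow> nat \<Rightarrow> real" where
  "SE_regret mu0 qh a T = real T * OPT mu0 qh a - se_value mu0 qh a T T (se_init mu0 qh T)"

end

theory Submission imports Defs begin

definition hh :: "nat \<Rightarrow> real" where "hh j = (1/2)^(2^j)"

lemma ln2_ge: "3/5 \<le> ln (2::real)"
proof -
  have "exp (3/5::real) ^ 5 = exp 3" by (subst exp_of_nat_mult[symmetric]) simp
  also have "exp (3::real) = exp 1 ^ 3" by (subst exp_of_nat_mult[symmetric]) simp
  also have "\<dots> \<le> 3 ^ 3" by (rule power_mono) (use exp_le in auto)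
  also have "\<dots> < (2::real) ^ 5" by simp
  finally have "exp (3/5::real) < 2" by (rule power_less_imp_less_base) simp
  thus ?thesis by (metis exp_le_cancel_iff exp_ln less_imp_le zero_less_numeral)
qed

lemma ln_ge_1m: "0 < (x::real) \<Longrightarrow> 1 - 1/x \<le> ln x"
  using ln_le_minus_one[of "1/x"] by (simp add: ln_div)

context fixes T :: nat assumes T4: "T \<ge> 4" begin

lemma lnT_ge: "6/5 \<le> ln (real T)"
proof -
  have "ln (real T) \<ge> ln 4" using T4 by simp
  moreover have "ln (4::real) = 2 * ln 2" using ln_realpow[of 2 2] by simp
  ultimately show ?thesis using ln2_ge by linarith
qed

lemma L_ge: "1/6 \<le> ln (ln (real T))"
proof -
  have p: "0 < ln (real T)" using lnT_ge by linarith
  have "1/ln (real T) \<le> 5/6" using lnT_ge p by (simp add: field_simps)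
  thus ?thesis using ln_ge_1m[OF p] by linarith
qed

lemma count_bound:
  assumes "1 / (2 * real T ^ 2) < hh j"
  shows "real j \<le> (20/3 + 5/3 * ln (ln (real T)))"
proof -
  have Tp: "(0::real) < real T" using T4 by simp
  have l2: "0 < ln (2::real)" by simp
  define N :: nat where "N = 2^j"
  have "hh j = 1 / 2 ^ N" by (simp add: hh_def power_one_over N_def)
  hence lt: "1 / (2 * real T ^ 2) < 1 / 2 ^ N" using assms by simp
  have p2: "(0::real) < 2 ^ N" by simp
  have p3: "(0::real) < 2 * real T ^ 2" using Tp by simp
  have "2 ^ N < 2 * real T ^ 2"
  proof (rule ccontr)
    assume "\<not> ?thesis"
    hence "2 * real T ^ 2 \<le> 2 ^ N" by linarith
    hence "1 / 2 ^ N \<le> 1 / (2 * real T ^ 2)" using frac_le[of 1 1 "2 * real T ^ 2" "2 ^ N"] p3 by simp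
    thus False using lt by linarith
  qed
  hence "ln (2 ^ N) < ln (2 * real T ^ 2)" using p2 p3 by (subst ln_less_cancel_iff) auto
  hence "real N * ln 2 < ln 2 + 2 * ln (real T)" using Tp by (simp add: ln_mult ln_realpow)
  hence "2^j * ln 2 < ln 2 + 2 * ln (real T)" by (simp add: N_def)
  moreover have "ln 2 \<le> ln (real T)" using T4 by simp
  ultimately have "2^j * ln 2 < 3 * ln (real T)" by linarith
  moreover have "(2::real)^j * (3/5) \<le> 2^j * ln 2" using ln2_ge by (intro mult_left_mono) auto
  ultimately have "(2::real)^j < 5 * ln (real T)" by linarith
  hence "ln ((2::real)^j) < ln (5 * ln (real T))" using lnT_ge by (subst ln_less_cancel_iff) auto
  hence "real j * ln 2 < ln 5 + ln (ln (real T))" using lnT_ge by (simp add: ln_mult ln_realpow)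
  moreover have "ln (5::real) \<le> 4" using ln_le_minus_one[of 5] by simp
  ultimately have "real j * ln 2 < 4 + ln (ln (real T))" by linarith
  moreover have "real j * (3/5) \<le> real j * ln 2" using ln2_ge by (intro mult_left_mono) auto
  ultimately have "real j * (3/5) < 4 + ln (ln (real T))" by linarith
  thus ?thesis by simp
qed

definition S0 :: "nat set" where "S0 = {j. 1 / (2 * real T ^ 2) < hh j}"

lemma S0_mem: "j \<in> S0 \<longleftrightarrow> 1 / (2 * real T ^ 2) < hh j" unfolding S0_def by (rule mem_Collect_eq)

lemma S0_sub: "S0 \<subseteq> {..nat \<lfloor>(20/3 + 5/3 * ln (ln (real T)))\<rfloor>}"
  using count_bound unfolding S0_def by (auto simp: le_nat_floor)

lemma S0_fin: "finite S0" using S0_sub finite_subset by blast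

lemma S0_card: "real (card S0) \<le> 48 * ln (ln (real T))"
proof -
  have X0: "0 \<le> (20/3 + 5/3 * ln (ln (real T)))" using L_ge by linarith
  have "card S0 \<le> card {..nat \<lfloor>(20/3 + 5/3 * ln (ln (real T)))\<rfloor>}" by (rule card_mono[OF _ S0_sub]) simp
  hence "card S0 \<le> nat \<lfloor>(20/3 + 5/3 * ln (ln (real T)))\<rfloor> + 1" by simp
  hence "real (card S0) \<le> real (nat \<lfloor>(20/3 + 5/3 * ln (ln (real T)))\<rfloor>) + 1" by linarith
  also have "\<dots> \<le> (20/3 + 5/3 * ln (ln (real T))) + 1" using of_nat_floor[OF X0] by linarith
  also have "\<dots> \<le> 48 * ln (ln (real T))" using L_ge by linarith
  finally show ?thesis .
qed

end

definition ff :: "real \<Rightarrow> real \<Rightarrow> real \<Rightarrow> real" where "ff mu0 qh x = mu0 / nuB mu0 qh x"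
definition Bc :: "real \<Rightarrow> real \<Rightarrow> real" where "Bc mu0 qh = (1 - mu0)^2 / (qh - mu0)"

locale inst =
  fixes mu0 qh a :: real and T :: nat
  assumes m0: "0 < mu0" and m1: "mu0 < qh" and m2: "qh < 1"
    and T4: "4 \<le> T" and am: "alpha_min mu0 qh \<le> a" and a1: "a \<le> 1"
begin

abbreviation "amin \<equiv> alpha_min mu0 qh"
abbreviation "nu \<equiv> nuB mu0 qh"
abbreviation "f \<equiv> ff mu0 qh"
abbreviation "B \<equiv> Bc mu0 qh"

lemma amin_pos: "0 < amin" using m0 m1 m2 by (simp add: alpha_min_def)
lemma amin_le1: "amin \<le> 1" using m0 m1 m2 by (simp add: alpha_min_def)
lemma a_pos: "0 < a" using amin_pos am by linarith
lemma B_pos: "0 < B" using m0 m1 m2 by (simp add: Bc_def)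

lemma nu_ge: "0 < x \<Longrightarrow> x \<le> 1 \<Longrightarrow> qh \<le> nu x"
proof -
  assume x: "0 < x" "x \<le> 1"
  have "qh - mu0 \<le> (qh - mu0) / x" using x m1 by (simp add: le_divide_eq)
  thus ?thesis by (simp add: nuB_def)
qed

lemma nu_le: "amin \<le> x \<Longrightarrow> nu x \<le> 1"
proof -
  assume x: "amin \<le> x"
  have xp: "0 < x" using x amin_pos by linarith
  have "(qh - mu0) / (1 - mu0) \<le> x" using x by (simp add: alpha_min_def)
  hence "qh - mu0 \<le> x * (1 - mu0)" using m2 m1 by (simp add: divide_le_eq)
  hence "(qh - mu0) / x \<le> 1 - mu0" using xp by (simp add: divide_le_eq mult.commute)
  thus ?thesis by (simp add: nuB_def)
qed

lemma f_pos: "0 < x \<Longrightarrow> x \<le> 1 \<Longrightarrow> 0 < f x"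
  using nu_ge[of x] m0 m1 by (simp add: ff_def)

lemma f_le1: "0 < x \<Longrightarrow> x \<le> 1 \<Longrightarrow> f x \<le> 1"
  using nu_ge[of x] m0 m1 by (simp add: ff_def)

lemma f_ge: "amin \<le> x \<Longrightarrow> x \<le> 1 \<Longrightarrow> mu0 \<le> f x"
  using nu_le[of x] nu_ge[of x] amin_pos m0 m1 by (simp add: ff_def le_divide_eq)

lemma acts_iff: "acts mu0 qh a v \<longleftrightarrow> nu a \<le> v"
proof -
  have "acts mu0 qh a v \<longleftrightarrow> qh - mu0 \<le> a * (v - mu0)" by (simp add: acts_def algebra_simps)
  also have "\<dots> \<longleftrightarrow> (qh - mu0) / a \<le> v - mu0" using a_pos by (simp add: divide_le_eq mult.commute)
  finally show ?thesis unfolding nuB_def by linarith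
qed

lemma acts_nu: "0 < m \<Longrightarrow> acts mu0 qh a (nu m) \<longleftrightarrow> m \<le> a"
proof -
  assume m: "0 < m"
  have "acts mu0 qh a (nu m) \<longleftrightarrow> (qh - mu0) / a \<le> (qh - mu0) / m" by (simp add: acts_iff nuB_def)
  also have "\<dots> \<longleftrightarrow> m \<le> a" 
  proof -
    have d: "0 < qh - mu0" using m1 by simp
    have "(qh - mu0) / a \<le> (qh - mu0) / m \<longleftrightarrow> (qh - mu0) * m \<le> (qh - mu0) * a"
      using m a_pos by (simp add: field_simps)
    also have "\<dots> \<longleftrightarrow> m \<le> a" using d by simp
    finally show ?thesis .
  qed
  finally show ?thesis .
qed

lemma not_acts0: "\<not> acts mu0 qh a 0"
proof -
  have "(1 - a) * mu0 \<le> mu0" using a_pos m0 by (simp add: algebra_simps)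
  thus ?thesis using m1 by (simp add: acts_def)
qed

lemma f_form: "0 < x \<Longrightarrow> f x = mu0 * x / (mu0 * x + (qh - mu0))"
proof -
  assume x: "0 < x"
  have "nu x = (mu0 * x + (qh - mu0)) / x" using x by (simp add: nuB_def field_simps)
  thus ?thesis by (simp add: ff_def)
qed

lemma lip:
  assumes m: "amin \<le> m" "m \<le> a"
  shows "f a - f m \<le> B * (a - m) * f m"
proof -
  define d where "d = qh - mu0"
  have d: "0 < d" using m1 by (simp add: d_def)
  have mp: "0 < m" using m amin_pos by linarith
  have "d / (1 - mu0) \<le> m" using m by (simp add: alpha_min_def d_def)
  hence h1: "d \<le> (1 - mu0) * m" using m2 m1 by (simp add: divide_le_eq mult.commute)
  have h1': "d \<le> (1 - mu0) * a" using h1 m(2) m0 m1 m2 by (smt (verit) mult_left_mono)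
  have "mu0 * d \<le> mu0 * ((1 - mu0) * a)" using h1' m0 by (simp add: mult_left_mono)
  hence h2: "d \<le> (1 - mu0) * (mu0 * a + d)" by (simp add: algebra_simps)
  have key: "d * d \<le> ((1 - mu0) * m) * ((1 - mu0) * (mu0 * a + d))"
    using mult_mono[OF h1 h2] d h1 by simp
  have A: "0 < mu0 * a + d" using mult_pos_pos[OF m0 a_pos] d by linarith
  have M: "0 < mu0 * m + d" using mult_pos_pos[OF m0 mp] d by linarith
  have fa: "f a = mu0 * a / (mu0 * a + d)" using f_form a_pos d_def by simp
  have fm: "f m = mu0 * m / (mu0 * m + d)" using f_form mp d_def by simp
  have "f a - f m = mu0 * d * (a - m) / ((mu0 * a + d) * (mu0 * m + d))"
    unfolding fa fm using A M by (simp add: field_simps)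
  also have "\<dots> = (mu0 * (a - m) / (mu0 * m + d)) * (d / (mu0 * a + d))"
    using A M by (simp add: field_simps)
  also have "\<dots> \<le> (mu0 * (a - m) / (mu0 * m + d)) * ((1 - mu0)^2 * m / d)"
  proof (rule mult_left_mono)
    show "0 \<le> mu0 * (a - m) / (mu0 * m + d)" using m0 m M by simp
    have "d * d \<le> (1 - mu0)^2 * m * (mu0 * a + d)" using key by (simp add: power2_eq_square algebra_simps)
    thus "d / (mu0 * a + d) \<le> (1 - mu0)^2 * m / d" using A d by (simp add: field_simps)
  qed
  also have "\<dots> = B * (a - m) * f m" unfolding fm Bc_def d_def[symmetric] using M d
    by (simp add: field_simps)
  finally show ?thesis .
qed

lemma fail:
  assumes "a < m" "m \<le> 1"
  shows "f a \<le> f m / qh"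
proof -
  have mp: "amin \<le> m" using assms am by linarith
  have n1: "nu m \<le> 1" using nu_le[OF mp] .
  have n2: "qh \<le> nu a" using nu_ge[OF a_pos a1] .
  have q: "0 < qh" using m0 m1 by simp
  have nm: "0 < nu m" using nu_ge[of m] mp amin_pos assms q by linarith
  have "nu m * qh \<le> nu a" using n1 n2 q by (smt (verit) mult_left_le_one_le mult.commute nm)
  moreover have "0 < nu m * qh" using nm q by simp
  ultimately have "mu0 / nu a \<le> mu0 / (nu m * qh)" using m0 by (intro divide_left_mono) auto
  thus ?thesis by (simp add: ff_def)
qed

lemma f_eq: "mu0 / nuB mu0 qh m = f m" by (simp add: ff_def)

lemma tau_exp:
  assumes "0 < m" "m \<le> 1"
  shows "measure_pmf.expectation (tau mu0 qh m) g = f m * g (nu m) + (1 - f m) * g 0"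
  using f_pos[OF assms] f_le1[OF assms] by (simp add: tau_def f_eq algebra_simps)

lemma tau_prob:
  assumes "0 < m" "m \<le> 1"
  shows "measure_pmf.prob (tau mu0 qh m) {v. acts mu0 qh a v} = (if m \<le> a then f m else 0)"
proof -
  have "(\<lambda>b. if b then nu m else 0) -` {v. acts mu0 qh a v} = (if m \<le> a then {True} else {})"
    using acts_nu[OF assms(1)] not_acts0 by auto
  thus ?thesis using f_pos[OF assms] f_le1[OF assms]
    by (simp add: tau_def f_eq measure_pmf_single)
qed

lemma nu_nz: "0 < m \<Longrightarrow> m \<le> 1 \<Longrightarrow> nu m \<noteq> 0"
  using nu_ge[of m] m0 m1 by auto

lemma val_explore:
  assumes "0 < m" "m \<le> 1"
  shows "se_value mu0 qh a T (Suc n) (Explore lo hi e mp m) =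
     (if m \<le> a then f m else 0)
     + f m * se_value mu0 qh a T n (se_update T (Explore lo hi e mp m) (nu m) (m \<le> a))
     + (1 - f m) * se_value mu0 qh a T n (Explore lo hi e mp m)"
  using tau_prob[OF assms] tau_exp[OF assms] nu_nz[OF assms] acts_nu[OF assms(1)]
  by (simp del: se_update.simps) (simp)

lemma val_exploit:
  assumes "0 < m" "m \<le> 1"
  shows "se_value mu0 qh a T (Suc n) (Exploit m) =
     (if m \<le> a then f m else 0) + se_value mu0 qh a T n (Exploit m)"
  using tau_prob[OF assms] tau_exp[OF assms] by (simp add: algebra_simps)

lemma hh_pos: "0 < hh k" by (simp add: hh_def)
lemma hh_lt1: "hh k < 1" by (simp add: hh_def power_less_one_iff)
lemma hh_pow: "hh k ^ (2^j) = hh (k + j)" by (simp add: hh_def power_mult[symmetric] power_add)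
lemma hh_sq: "hh k ^ 2 = hh (Suc k)" using hh_pow[of k 1] by simp

definition PP :: "real \<Rightarrow> real \<Rightarrow> real" where "PP x e = (if 0 \<le> x then x * (x / e + 1) else 0)"
definition Rs :: "real \<Rightarrow> nat set" where "Rs e = {j. 1 / (2 * real T ^ 2) < hh j \<and> hh j \<le> e}"
definition cc :: real where "cc = 3 * B + 1 / qh"

definition Phi :: "se_state \<Rightarrow> real" where
  "Phi s = (case s of Explore lo hi e mp m \<Rightarrow> B * PP (a - m) e + 1 / qh + cc * real (card (Rs (e^2)))
            | Exploit lo \<Rightarrow> 0)"

definition Inv :: "se_state \<Rightarrow> bool" where
  "Inv s = (case s of Explore lo hi e mp m \<Rightarrow> amin \<le> mp \<and> mp \<le> a \<and> m = mp + e \<and> m \<le> hi \<and> a \<le> hi \<and> hi \<le> 1 \<and> (\<exists>k. e = hh k)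
            | Exploit lo \<Rightarrow> amin \<le> lo \<and> lo \<le> a \<and> a - lo \<le> 1 / real T)"

lemma cc_pos: "0 \<le> cc" using B_pos m0 m1 by (simp add: cc_def)

lemma Rs_fin: "finite (Rs e)"
proof -
  have "Rs e \<subseteq> S0 T" unfolding Rs_def using S0_mem[OF T4] by auto
  thus ?thesis using S0_fin[OF T4] finite_subset by blast
qed

lemma enter:
  assumes lo: "amin \<le> lo" "lo \<le> a" and hi: "a \<le> hi" "hi \<le> 1"
    and w2: "(hi - lo)^2 \<le> 2 * e" and ek: "e = hh k"
  shows "Inv (enter_phase T lo hi e) \<and> Phi (enter_phase T lo hi e) \<le> cc * real (card (Rs e))"
proof (cases "hi - lo > 1 / real T")
  case False
  hence "enter_phase T lo hi e = Exploit lo" by (simp add: enter_phase_def)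
  thus ?thesis using False lo hi cc_pos by (simp add: Inv_def Phi_def)
next
  case True
  define w where "w = hi - lo"
  have Tp: "0 < real T" using T4 by simp
  have wT: "1 / real T < w" using True w_def by simp
  have "0 < 1 / real T" using Tp by simp
  hence wp: "0 < w" using wT by linarith
  have w1: "w \<le> 1" using lo hi amin_pos w_def by linarith
  have e0: "0 < e" "e < 1" using ek hh_pos hh_lt1 by auto
  define P where "P j = (lo + e^(2^j) \<le> hi)" for j
  have exP: "\<exists>j. P j"
  proof -
    obtain n where n: "e ^ n < w" using real_arch_pow_inv[OF wp e0(2)] by blast
    have "e ^ (2^n) \<le> e ^ n" using e0 by (intro power_decreasing) (auto intro: less_imp_le)
    thus ?thesis using n w_def P_def by (intro exI[of _ n]) simp
  qed
  define j where "j = (LEAST j. P j)"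
  have Pj: "P j" unfolding j_def using exP by (rule LeastI_ex)
  define e' where "e' = e^(2^j)"
  have st: "enter_phase T lo hi e = Explore lo hi e' lo (lo + e')"
    using True by (simp add: enter_phase_def Let_def j_def e'_def P_def)
  have e'k: "e' = hh (k + j)" using ek hh_pow e'_def by simp
  have e'0: "0 < e'" "e' < 1" using e'k hh_pos hh_lt1 by auto
  have e'e: "e' \<le> e" unfolding e'_def using e0 power_decreasing[of 1 "2^j" e] by simp
  have ww: "w^2 \<le> 2 * e'"
  proof (cases "j = 0")
    case True thus ?thesis using w2 w_def e'_def by simp
  next
    case False
    hence "\<not> P (j - 1)" unfolding j_def by (intro not_less_Least) simp
    hence lt: "w < e^(2^(j-1))" using P_def w_def by simp
    have "w^2 < (e^(2^(j-1)))^2" using lt wp by (intro power_strict_mono) auto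
    also have "(e^(2^(j-1)))^2 = e'" unfolding e'_def power_mult[symmetric]
      using False by (metis Suc_diff_1 neq0_conv power_Suc2)
    finally show ?thesis using e'0 by simp
  qed
  have low: "1 / (2 * real T ^ 2) < e'"
  proof -
    have "(1 / real T)^2 < w^2" using wT Tp by (intro power_strict_mono) auto
    hence "1 / real T ^ 2 < w^2" by (simp add: power_one_over)
    thus ?thesis using ww by (simp add: field_simps)
  qed
  have inv: "Inv (enter_phase T lo hi e)"
  proof -
    have ex: "\<exists>k. e' = hh k" using e'k by blast
    have "lo + e' \<le> hi" using Pj P_def e'_def by simp
    thus ?thesis unfolding st Inv_def using lo hi ex by simp
  qed
  have PPb: "PP (a - (lo + e')) e' \<le> 3"
  proof (cases "0 \<le> a - (lo + e')")
    case False thus ?thesis by (simp add: PP_def)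
  next
    case True
    define x where "x = a - (lo + e')"
    have x: "0 \<le> x" "x \<le> w" using True x_def w_def hi e'0 by auto
    have "x * (x / e' + 1) \<le> w * (w / e' + 1)"
      using x e'0 by (intro mult_mono add_mono divide_right_mono) auto
    also have "\<dots> = w^2 / e' + w" using e'0 by (simp add: field_simps power2_eq_square)
    also have "\<dots> \<le> 3"
    proof -
      have "w^2 / e' \<le> 2" using ww e'0 pos_divide_le_eq[of e' "w^2" 2] by linarith
      thus ?thesis using w1 by linarith
    qed
    finally show ?thesis using True x_def by (simp add: PP_def)
  qed
  have card: "card (Rs (e'^2)) + 1 \<le> card (Rs e)"
  proof -
    have sub: "insert (k + j) (Rs (e'^2)) \<subseteq> Rs e"
    proof
      fix i assume "i \<in> insert (k + j) (Rs (e'^2))"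
      moreover have "e'^2 \<le> e" using e'0 e'e power_decreasing[of 1 2 e'] by simp
      ultimately show "i \<in> Rs e" using low e'e e'k by (auto simp: Rs_def)
    qed
    have nin: "k + j \<notin> Rs (e'^2)"
    proof
      assume "k + j \<in> Rs (e'^2)"
      hence "e' \<le> e'^2" using e'k by (simp add: Rs_def)
      thus False using e'0 by (simp add: power2_eq_square)
    qed
    have "card (insert (k + j) (Rs (e'^2))) \<le> card (Rs e)" using sub Rs_fin by (rule card_mono[rotated])
    thus ?thesis using nin Rs_fin by simp
  qed
  have "Phi (enter_phase T lo hi e) = B * PP (a - (lo + e')) e' + 1 / qh + cc * real (card (Rs (e'^2)))"
    by (simp add: st Phi_def)
  also have "\<dots> \<le> B * 3 + 1 / qh + cc * real (card (Rs (e'^2)))"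
    using PPb B_pos by simp
  also have "\<dots> = cc * (real (card (Rs (e'^2))) + 1)" by (simp add: cc_def algebra_simps)
  also have "\<dots> \<le> cc * real (card (Rs e))"
  proof -
    have "real (card (Rs (e'^2)) + 1) \<le> real (card (Rs e))" using card by (simp only: of_nat_le_iff)
    hence "real (card (Rs (e'^2))) + 1 \<le> real (card (Rs e))" by simp
    thus ?thesis using cc_pos by (rule mult_left_mono)
  qed
  finally show ?thesis using inv by simp
qed

lemma PP_nonneg: "0 < e \<Longrightarrow> 0 \<le> PP x e" by (simp add: PP_def)

lemma PP_ge: "0 \<le> x \<Longrightarrow> 0 < e \<Longrightarrow> x \<le> PP x e"
proof -
  assume x: "0 \<le> x" and e: "0 < e"
  have "x * 1 \<le> x * (x / e + 1)" using x e by (intro mult_left_mono) auto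
  thus ?thesis using x by (simp add: PP_def)
qed

lemma PP_step: "0 \<le> x \<Longrightarrow> 0 < e \<Longrightarrow> x \<le> PP x e - PP (x - e) e"
proof -
  assume x: "0 \<le> x" and e: "0 < e"
  show ?thesis
  proof (cases "0 \<le> x - e")
    case True
    have "PP x e - PP (x - e) e = x * (x / e + 1) - (x - e) * ((x - e) / e + 1)"
      using x True by (simp add: PP_def)
    also have "\<dots> = 2 * x" using e by (simp add: field_simps power2_eq_square)
    finally show ?thesis using x by simp
  next
    case False
    thus ?thesis using PP_ge[OF x e] by (simp add: PP_def)
  qed
qed

lemma Phi_nonneg: "Inv s \<Longrightarrow> 0 \<le> Phi s"
proof (cases s)
  case (Explore lo hi e mp m)
  assume "Inv s"
  then obtain k where "e = hh k" using Explore by (auto simp: Inv_def)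
  hence "0 < e" using hh_pos by simp
  hence "0 \<le> B * PP (a - m) e" using B_pos PP_nonneg by simp
  moreover have "0 \<le> cc * real (card (Rs (e^2)))" using cc_pos by simp
  moreover have "0 \<le> 1 / qh" using m0 m1 by simp
  ultimately show ?thesis using Explore by (simp add: Phi_def)
next
  case (Exploit lo) thus ?thesis by (simp add: Phi_def)
qed

lemma trans:
  assumes inv: "Inv (Explore lo hi e mp m)"
  defines "s' \<equiv> se_update T (Explore lo hi e mp m) (nu m) (m \<le> a)"
  shows "Inv s' \<and> f a - (if m \<le> a then f m else 0) \<le> f m * (Phi (Explore lo hi e mp m) - Phi s')"
proof -
  from inv obtain k where I: "amin \<le> mp" "mp \<le> a" "m = mp + e" "m \<le> hi" "a \<le> hi" "hi \<le> 1" "e = hh k"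
    by (auto simp: Inv_def)
  have e0: "0 < e" using I hh_pos by simp
  have mm: "amin \<le> m" "0 < m" "m \<le> 1" using I e0 amin_pos by linarith+
  have fm: "0 < f m" "f m \<le> 1" using f_pos f_le1 mm by auto
  have nz: "nu m \<noteq> 0" using nu_nz mm by simp
  have e2: "e^2 = hh (Suc k)" using I hh_sq by simp
  have Phis: "Phi (Explore lo hi e mp m) = B * PP (a - m) e + 1 / qh + cc * real (card (Rs (e^2)))"
    by (simp add: Phi_def)
  show ?thesis
  proof (cases "m \<le> a")
    case act: True
    have lipm: "f a - f m \<le> B * (a - m) * f m" using lip mm act by simp
    show ?thesis
    proof (cases "m + e \<le> hi")
      case True
      have s': "s' = Explore lo hi e m (m + e)" using True act nz by (simp add: s'_def)
      have "Inv s'" unfolding s' Inv_def using I mm act True by auto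
      moreover have "B * (a - m) \<le> Phi (Explore lo hi e mp m) - Phi s'"
      proof -
        have "a - m \<le> PP (a - m) e - PP (a - m - e) e" using PP_step act e0 by simp
        hence "B * (a - m) \<le> B * (PP (a - m) e - PP (a - m - e) e)" using B_pos by (intro mult_left_mono) auto
        thus ?thesis unfolding s' Phis by (simp add: Phi_def algebra_simps)
      qed
      ultimately show ?thesis using act lipm fm
        by (smt (verit) mult.commute mult_left_mono)
    next
      case False
      have s': "s' = enter_phase T m hi (e^2)" using False act nz by (simp add: s'_def)
      have w: "(hi - m)^2 \<le> 2 * e^2"
      proof -
        have "(hi - m)^2 \<le> e^2" using False act I by (intro power_mono) auto
        moreover have "0 \<le> e^2" by simp
        ultimately show ?thesis by linarith
      qed
      have en: "Inv s' \<and> Phi s' \<le> cc * real (card (Rs (e^2)))"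
        unfolding s' using enter[OF mm(1) act I(5) I(6) w e2] .
      have "B * (a - m) \<le> B * PP (a - m) e" using PP_ge act e0 B_pos by (intro mult_left_mono) auto
      hence "B * (a - m) \<le> Phi (Explore lo hi e mp m) - Phi s'" using en m0 m1 Phis
        by (smt (verit) divide_pos_pos)
      thus ?thesis using en act lipm fm
        by (smt (verit) mult.commute mult_left_mono)
    qed
  next
    case nact: False
    have s': "s' = enter_phase T mp m (e^2)" using nact nz by (simp add: s'_def)
    have w: "(m - mp)^2 \<le> 2 * e^2" using I e0 by simp
    have en: "Inv s' \<and> Phi s' \<le> cc * real (card (Rs (e^2)))"
      unfolding s' using enter[OF I(1) I(2) _ mm(3) w e2] nact by simp
    have "0 \<le> B * PP (a - m) e" using B_pos PP_nonneg e0 by simp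
    hence d: "1 / qh \<le> Phi (Explore lo hi e mp m) - Phi s'" using en Phis by linarith
    have "f a \<le> f m * (1 / qh)" using fail[of m] nact mm by simp
    also have "\<dots> \<le> f m * (Phi (Explore lo hi e mp m) - Phi s')" using d fm by (intro mult_left_mono) auto
    finally show ?thesis using en nact by simp
  qed
qed

lemma main: "Inv s \<Longrightarrow> real n * f a - se_value mu0 qh a T n s \<le> Phi s + real n * B / real T"
proof (induction n arbitrary: s)
  case 0 thus ?case using Phi_nonneg by simp
next
  case (Suc n)
  have Tp: "0 < real T" using T4 by simp
  have BT: "0 \<le> B / real T" using B_pos Tp by simp
  show ?case
  proof (cases s)
    case (Exploit lo)
    have I: "amin \<le> lo" "lo \<le> a" "a - lo \<le> 1 / real T" using Suc.prems Exploit by (auto simp: Inv_def)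
    have lo: "0 < lo" "lo \<le> 1" using I amin_pos a1 by linarith+
    have v: "se_value mu0 qh a T (Suc n) s = f lo + se_value mu0 qh a T n s"
      using val_exploit[OF lo] I Exploit by simp
    have "f a - f lo \<le> B * (a - lo) * f lo" using lip I by simp
    also have "\<dots> \<le> B * (a - lo) * 1" using B_pos I f_le1[OF lo] by (intro mult_left_mono) auto
    also have "\<dots> \<le> B * (1 / real T)" using B_pos I mult_left_mono[of "a - lo" "1 / real T" B] by simp
    finally have st: "f a - f lo \<le> B / real T" by simp
    have IH: "real n * f a - se_value mu0 qh a T n s \<le> Phi s + real n * B / real T" using Suc.IH Suc.prems .
    have "Phi s = 0" using Exploit by (simp add: Phi_def)
    thus ?thesis using v st IH by (simp add: algebra_simps add_divide_distrib)
  next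
    case (Explore lo hi e mp m)
    have inv: "Inv (Explore lo hi e mp m)" using Suc.prems Explore by simp
    from inv obtain k where I: "amin \<le> mp" "m = mp + e" "hi \<le> 1" "m \<le> hi" "e = hh k"
      by (auto simp: Inv_def)
    have e0: "0 < e" using I hh_pos by simp
    have mm: "0 < m" "m \<le> 1" using I e0 amin_pos by linarith+
    have fm: "0 < f m" "f m \<le> 1" using f_pos f_le1 mm by auto
    define s' where "s' = se_update T (Explore lo hi e mp m) (nu m) (m \<le> a)"
    define act where "act = (if m \<le> a then f m else 0)"
    have tr: "Inv s' \<and> f a - act \<le> f m * (Phi s - Phi s')"
      using trans[OF inv] Explore by (simp add: s'_def act_def)
    have v: "se_value mu0 qh a T (Suc n) s = act + f m * se_value mu0 qh a T n s' + (1 - f m) * se_value mu0 qh a T n s"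
      using val_explore[OF mm] Explore by (simp add: s'_def act_def)
    have IH1: "real n * f a - se_value mu0 qh a T n s' \<le> Phi s' + real n * B / real T" using Suc.IH tr by blast
    have IH2: "real n * f a - se_value mu0 qh a T n s \<le> Phi s + real n * B / real T" using Suc.IH Suc.prems by blast
    have A1: "f m * (real n * f a - se_value mu0 qh a T n s') \<le> f m * (Phi s' + real n * B / real T)"
      using IH1 fm by (intro mult_left_mono) auto
    have A2: "(1 - f m) * (real n * f a - se_value mu0 qh a T n s) \<le> (1 - f m) * (Phi s + real n * B / real T)"
      using IH2 fm by (intro mult_left_mono) auto
    have "real (Suc n) * f a - se_value mu0 qh a T (Suc n) s
        = (f a - act) + f m * (real n * f a - se_value mu0 qh a T n s') + (1 - f m) * (real n * f a - se_value mu0 qh a T n s)"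
      unfolding v by (simp add: algebra_simps)
    also have "\<dots> \<le> f m * (Phi s - Phi s') + f m * (Phi s' + real n * B / real T) + (1 - f m) * (Phi s + real n * B / real T)"
      using tr A1 A2 by linarith
    also have "\<dots> = Phi s + real n * B / real T" by (simp add: algebra_simps add_divide_distrib[symmetric] diff_divide_distrib[symmetric])
    also have "\<dots> \<le> Phi s + real (Suc n) * B / real T" using BT by (simp add: add_divide_distrib algebra_simps)
    finally show ?thesis .
  qed
qed

lemma markov_bp:
  assumes bp: "bayes_plausible mu0 p"
  shows "measure_pmf.prob p {v. acts mu0 qh a v} \<le> f a"
proof -
  have sp: "set_pmf p \<subseteq> {0..1}" and ex: "measure_pmf.expectation p (\<lambda>v. v) = mu0"
    using bp by (auto simp: bayes_plausible_def)
  have np: "0 < nu a" using nu_ge[OF a_pos a1] m0 m1 by linarith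
  define A where "A = {v. nu a \<le> v}"
  have int: "integrable (measure_pmf p) (\<lambda>v. v)"
    by (rule measure_pmf.integrable_const_bound[where B=1]) (use sp in \<open>auto simp: AE_measure_pmf_iff\<close>)
  have "(\<integral>v. nu a * indicator A v \<partial>measure_pmf p) \<le> (\<integral>v. v \<partial>measure_pmf p)"
  proof (rule integral_mono_AE'[OF int])
    show "AE v in measure_pmf p. nu a * indicator A v \<le> v"
      using sp np by (auto simp: AE_measure_pmf_iff A_def indicator_def)
    show "AE v in measure_pmf p. 0 \<le> v" using sp by (auto simp: AE_measure_pmf_iff)
  qed
  hence "nu a * measure_pmf.prob p A \<le> mu0" using ex by simp
  hence "measure_pmf.prob p A \<le> mu0 / nu a" using np by (simp add: le_divide_eq mult.commute)
  moreover have "{v. acts mu0 qh a v} = A" using acts_iff by (auto simp: A_def)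
  ultimately show ?thesis by (simp add: ff_def)
qed

lemma bp_ex: "bayes_plausible mu0 (return_pmf mu0)"
  using m0 m1 m2 by (simp add: bayes_plausible_def)

lemma OPT_le: "OPT mu0 qh a \<le> f a"
  unfolding OPT_def
proof (rule cSup_least)
  show "{measure_pmf.prob p {v. acts mu0 qh a v} |p. bayes_plausible mu0 p} \<noteq> {}" using bp_ex by blast
  show "\<And>x. x \<in> {measure_pmf.prob p {v. acts mu0 qh a v} |p. bayes_plausible mu0 p} \<Longrightarrow> x \<le> f a"
    using markov_bp by blast
qed

lemma init: "Inv (se_init mu0 qh T) \<and> Phi (se_init mu0 qh T) \<le> cc * real (card (Rs (1/2)))"
proof -
  have h0: "1/2 = hh 0" by (simp add: hh_def)
  have "(1 - amin)^2 \<le> 1" using amin_pos amin_le1 by (intro power_le_one) auto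
  hence w: "(1 - amin)^2 \<le> 2 * (1/2)" by simp
  show ?thesis unfolding se_init_def using enter[OF order_refl am a1 order_refl w h0] .
qed

lemma regret: "SE_regret mu0 qh a T \<le> cc * real (card (Rs (1/2))) + B"
proof -
  have Tp: "0 < real T" using T4 by simp
  have "SE_regret mu0 qh a T \<le> real T * f a - se_value mu0 qh a T T (se_init mu0 qh T)"
    unfolding SE_regret_def using OPT_le Tp by (simp add: mult_left_mono)
  also have "\<dots> \<le> Phi (se_init mu0 qh T) + real T * B / real T" using main init by blast
  also have "\<dots> \<le> cc * real (card (Rs (1/2))) + B" using init Tp by simp
  finally show ?thesis .
qed

lemma card_Rs: "real (card (Rs (1/2))) \<le> 48 * ln (ln (real T))"
proof -
  have "Rs (1/2) \<subseteq> S0 T" unfolding Rs_def using S0_mem[OF T4] by auto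
  hence "card (Rs (1/2)) \<le> card (S0 T)" using S0_fin[OF T4] by (rule card_mono[rotated])
  hence "real (card (Rs (1/2))) \<le> real (card (S0 T))" by simp
  thus ?thesis using S0_card[OF T4] by linarith
qed

lemma final: "SE_regret mu0 qh a T \<le> 200 * (2 * (1 - mu0)^2 / ((qh - mu0) * qh) + 1) * ln (ln (real T))"
proof -
  define C where "C = 2 * B / qh + 1"
  define L where "L = ln (ln (real T))"
  have CC: "2 * (1 - mu0)^2 / ((qh - mu0) * qh) + 1 = C" by (simp add: C_def Bc_def)
  have q: "0 < qh" "qh < 1" using m0 m1 m2 by auto
  have L: "1/6 \<le> L" using L_ge[OF T4] L_def by simp
  have Bq: "B \<le> B / qh" using B_pos q by (simp add: le_divide_eq)
  have BC: "B \<le> C / 2" using Bq by (simp add: C_def)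
  have Cpos: "1 \<le> C" using B_pos q by (simp add: C_def)
  have qC: "1 / qh \<le> 2 * C"
  proof (cases "1/2 \<le> qh")
    case True
    hence "1 / qh \<le> 2" using q by (simp add: divide_le_eq)
    thus ?thesis using Cpos by linarith
  next
    case False
    hence mh: "mu0 < 1/2" using m1 by linarith
    have "1/4 \<le> (1 - mu0)^2"
    proof -
      have "(1/2::real)^2 \<le> (1 - mu0)^2" using mh by (intro power_mono) auto
      thus ?thesis by (simp add: power2_eq_square)
    qed
    moreover have "(1 - mu0)^2 \<le> B"
    proof -
      have "0 < qh - mu0" "qh - mu0 \<le> 1" using m1 m0 q by auto
      thus ?thesis unfolding Bc_def by (simp add: le_divide_eq mult_left_le)
    qed
    ultimately have "1/4 \<le> B" by linarith
    hence "(1/4) / qh \<le> B / qh" using q by (intro divide_right_mono) auto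
    hence "1 / qh \<le> 4 * (B / qh)" by simp
    thus ?thesis by (simp add: C_def)
  qed
  have ccC: "cc \<le> 7/2 * C" using BC qC by (simp add: cc_def)
  have "SE_regret mu0 qh a T \<le> cc * real (card (Rs (1/2))) + B" by (rule regret)
  also have "\<dots> \<le> (7/2 * C) * (48 * L) + C / 2"
  proof -
    have "cc * real (card (Rs (1/2))) \<le> (7/2 * C) * real (card (Rs (1/2)))"
      using ccC by (intro mult_right_mono) auto
    also have "\<dots> \<le> (7/2 * C) * (48 * L)" using card_Rs L_def Cpos by (intro mult_left_mono) auto
    finally show ?thesis using BC by linarith
  qed
  also have "\<dots> \<le> 200 * C * L"
  proof -
    have "C / 2 \<le> 3 * (C * L)" using L Cpos mult_left_mono[of "1/6" L C] by simp
    moreover have "(7/2 * C) * (48 * L) = 168 * (C * L)" by simp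
    moreover have "200 * C * L = 200 * (C * L)" by simp
    moreover have "0 \<le> C * L" using L Cpos by simp
    ultimately show ?thesis by linarith
  qed
  finally show ?thesis using CC L_def by simp
qed

end
lemma se_value_nonneg: "0 \<le> se_value mu0 qh a T n s"
proof (induction n arbitrary: s)
  case 0 thus ?case by simp
next
  case (Suc n)
  have "0 \<le> measure_pmf.expectation (se_play mu0 qh s) (\<lambda>v. se_value mu0 qh a T n (se_update T s v (acts mu0 qh a v)))"
    by (rule integral_nonneg_AE) (use Suc.IH in simp)
  thus ?case by simp
qed

lemma OPT_small:
  assumes m: "0 < mu0" "mu0 < qh" "qh < 1" and a: "0 < a" "a < alpha_min mu0 qh"
  shows "OPT mu0 qh a \<le> 0"
  unfolding OPT_def
proof (rule cSup_least)
  have "bayes_plausible mu0 (return_pmf mu0)" using m by (simp add: bayes_plausible_def)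
  thus "{measure_pmf.prob p {v. acts mu0 qh a v} |p. bayes_plausible mu0 p} \<noteq> {}" by blast
  have no: "\<not> acts mu0 qh a v" if v: "v \<le> 1" for v
  proof -
    have "a * (1 - mu0) < qh - mu0" using a m by (simp add: alpha_min_def less_divide_eq)
    moreover have "a * v \<le> a * 1" using v a by (intro mult_left_mono) auto
    ultimately have "(1 - a) * mu0 + a * v < qh" by (simp add: algebra_simps)
    thus ?thesis by (simp add: acts_def)
  qed
  show "x \<le> 0" if xS: "x \<in> {measure_pmf.prob p {v. acts mu0 qh a v} |p. bayes_plausible mu0 p}" for x
  proof -
    obtain p where p: "bayes_plausible mu0 p" "x = measure_pmf.prob p {v. acts mu0 qh a v}" using xS by blast
    have "set_pmf p \<inter> {v. acts mu0 qh a v} = {}" using p(1) no by (auto simp: bayes_plausible_def)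
    hence "measure_pmf.prob p {v. acts mu0 qh a v} = 0" by (simp only: measure_pmf_zero_iff)
    thus ?thesis using p(2) by simp
  qed
qed

theorem proposition3p2:
  shows "\<exists>K::real. \<forall>mu0 qh. 0 < mu0 \<longrightarrow> mu0 < qh \<longrightarrow> qh < 1 \<longrightarrow>
           (\<forall>T::nat. T \<ge> 4 \<longrightarrow> (\<forall>a. 0 < a \<and> a \<le> 1 \<longrightarrow>
              SE_regret mu0 qh a T
                \<le> K * (2 * (1 - mu0)^2 / ((qh - mu0) * qh) + 1) * ln (ln (real T))))"
proof (intro exI[of _ 200] allI impI, elim conjE)
  fix mu0 qh a :: real and T :: nat
  assume m: "0 < mu0" "mu0 < qh" "qh < 1" and T: "4 \<le> T" and a: "0 < a" "a \<le> 1"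
  show "SE_regret mu0 qh a T \<le> 200 * (2 * (1 - mu0)^2 / ((qh - mu0) * qh) + 1) * ln (ln (real T))"
  proof (cases "alpha_min mu0 qh \<le> a")
    case True
    interpret inst mu0 qh a T using m T True a by unfold_locales auto
    show ?thesis by (rule final)
  next
    case False
    have "OPT mu0 qh a \<le> 0" using OPT_small m a False by simp
    hence "real T * OPT mu0 qh a \<le> 0" by (simp add: mult_nonneg_nonpos)
    hence "SE_regret mu0 qh a T \<le> 0"
      using se_value_nonneg[of mu0 qh a T T "se_init mu0 qh T"]
      unfolding SE_regret_def by linarith
    moreover have "0 \<le> 2 * (1 - mu0)^2 / ((qh - mu0) * qh) + 1" using m by simp
    moreover have "0 \<le> ln (ln (real T))" using L_ge[OF T] by linarith
    ultimately have "0 \<le> 200 * (2 * (1 - mu0)^2 / ((qh - mu0) * qh) + 1) * ln (ln (real T))" by simp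
    thus ?thesis using \<open>SE_regret mu0 qh a T \<le> 0\<close> by linarith
  qed
qed

end
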